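(* Let $n\geq2$, let $\xi^1,\dots,\xi^{n-1}\in\mathbb{Q}^3\setminus\{0\}$ and $\xi^n\in\mathbb{Q}^3$. Then there exist points $x^1,\dots,x^n\in\mathbb{R}^3$ such that: if $\xi^n\neq0$, then $\Pi(x^i+\mathbb{R}\xi^i)\cap\Pi(x^j+\mathbb{R}\xi^j)=\emptyset$ for all $i\neq j$ in $\{1,\dots,n\}$; and if $\xi^n=0$, then $\Pi(x^i+\mathbb{R}\xi^i)\cap\Pi(x^j+\mathbb{R}\xi^j)=\emptyset$ for all $i\neq j$ in $\{1,\dots,n-1\}$ and $0_{Y_3}\notin\Pi(x^i+\mathbb{R}\xi^i)$ for all $i\in\{1,\dots,n-1\}$.
   Context: $Y_3=\mathbb{R}^3/\mathbb{Z}^3$, $\Pi:\mathbb{R}^3\to Y_3$ is the canonical surjection, and $0_{Y_3}=\Pi(0)$. *)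

theory Defs
  imports "HOL-Analysis.Analysis"
begin

text \<open>The torus Y_3 = R^3/Z^3 is represented by its elements, the cosets
  x + Z^3. The canonical surjection Pi maps x to its coset.\<close>

definition Pi3 :: "real^3 \<Rightarrow> (real^3) set" where
  "Pi3 x = {y. \<forall>k. y $ k - x $ k \<in> \<int>}"

definition zeroY3 :: "(real^3) set" where
  "zeroY3 = Pi3 0"

definition rat_vec :: "real^3 \<Rightarrow> bool" where
  "rat_vec v \<longleftrightarrow> (\<forall>k. v $ k \<in> \<rat>)"

definition line3 :: "real^3 \<Rightarrow> real^3 \<Rightarrow> (real^3) set" where
  "line3 x \<xi> = {x + t *\<^sub>R \<xi> | t. True}"

end

theory Submission
  imports Defs
begin

lemma rat_denom: "(q::real) \<in> \<rat> \<Longrightarrow> \<exists>d::int. d > 0 \<and> of_int d * q \<in> \<int>"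
proof -
  assume "q \<in> \<rat>"
  then obtain a b where ab: "b > 0" "q = of_int a / of_int b" using Rats_cases' by metis
  then have "of_int b * q = of_int a" by simp
  then show ?thesis using ab(1) by (intro exI[of _ b]) auto
qed

lemma rat_triple:
  fixes a1 a2 a3 b1 b2 b3 :: real
  assumes "a1 \<in> \<rat>" "a2 \<in> \<rat>" "a3 \<in> \<rat>" "b1 \<in> \<rat>" "b2 \<in> \<rat>" "b3 \<in> \<rat>"
  shows "\<exists>w1 w2 w3. w1 \<in> \<rat> \<and> w2 \<in> \<rat> \<and> w3 \<in> \<rat> \<and> (w1 \<noteq> 0 \<or> w2 \<noteq> 0 \<or> w3 \<noteq> 0)
     \<and> w1*a1 + w2*a2 + w3*a3 = 0 \<and> w1*b1 + w2*b2 + w3*b3 = 0"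
proof -
  let ?c1 = "a2*b3 - a3*b2" and ?c2 = "a3*b1 - a1*b3" and ?c3 = "a1*b2 - a2*b1"
  have r: "?c1 \<in> \<rat>" "?c2 \<in> \<rat>" "?c3 \<in> \<rat>" using assms by auto
  show ?thesis
  proof (cases "?c1 \<noteq> 0 \<or> ?c2 \<noteq> 0 \<or> ?c3 \<noteq> 0")
    case True
    show ?thesis
      by (rule exI[of _ ?c1], rule exI[of _ ?c2], rule exI[of _ ?c3]) (use r True in \<open>auto simp: algebra_simps\<close>)
  next
    case False
    then have c: "?c1 = 0" "?c2 = 0" "?c3 = 0" by auto
    show ?thesis
    proof (cases "a2 \<noteq> 0 \<or> a3 \<noteq> 0")
      case True
      show ?thesis
        by (rule exI[of _ 0], rule exI[of _ a3], rule exI[of _ "-a2"]) (use assms c True in \<open>auto simp: algebra_simps\<close>)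
    next
      case F2: False
      show ?thesis
      proof (cases "a1 \<noteq> 0")
        case True
        show ?thesis
          by (rule exI[of _ "-a3"], rule exI[of _ 0], rule exI[of _ a1]) (use assms c True F2 in \<open>auto simp: algebra_simps\<close>)
      next
        case F1: False
        show ?thesis
        proof (cases "b2 \<noteq> 0 \<or> b3 \<noteq> 0")
          case True
          show ?thesis
            by (rule exI[of _ 0], rule exI[of _ b3], rule exI[of _ "-b2"]) (use assms F1 F2 True in \<open>auto simp: algebra_simps\<close>)
        next
          case F3: False
          show ?thesis
          proof (cases "b1 \<noteq> 0")
            case True
            show ?thesis
              by (rule exI[of _ "-b3"], rule exI[of _ 0], rule exI[of _ b1]) (use assms F1 F2 F3 True in \<open>auto simp: algebra_simps\<close>)
          next
            case False
            show ?thesis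
              by (rule exI[of _ 1], rule exI[of _ 0], rule exI[of _ 0]) (use F1 F2 F3 False in auto)
          qed
        qed
      qed
    qed
  qed
qed

lemma ortho_int:
  assumes "rat_vec a" "rat_vec b"
  shows "\<exists>w::real^3. (\<forall>k. w$k \<in> \<int>) \<and> w \<noteq> 0 \<and> w \<bullet> a = 0 \<and> w \<bullet> b = 0"
proof -
  have q: "a$1 \<in> \<rat>" "a$2 \<in> \<rat>" "a$3 \<in> \<rat>" "b$1 \<in> \<rat>" "b$2 \<in> \<rat>" "b$3 \<in> \<rat>"
    using assms by (auto simp: rat_vec_def)
  obtain w1 w2 w3 where w: "w1 \<in> \<rat>" "w2 \<in> \<rat>" "w3 \<in> \<rat>" "w1 \<noteq> 0 \<or> w2 \<noteq> 0 \<or> w3 \<noteq> 0"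
     "w1*a$1 + w2*a$2 + w3*a$3 = 0" "w1*b$1 + w2*b$2 + w3*b$3 = 0"
    using rat_triple[OF q] by blast
  obtain d1 where d1: "d1 > 0" "of_int d1 * w1 \<in> \<int>" using rat_denom[OF w(1)] by blast
  obtain d2 where d2: "d2 > 0" "of_int d2 * w2 \<in> \<int>" using rat_denom[OF w(2)] by blast
  obtain d3 where d3: "d3 > 0" "of_int d3 * w3 \<in> \<int>" using rat_denom[OF w(3)] by blast
  define D where "D = real_of_int (d1*d2*d3)"
  have D0: "D > 0" using d1 d2 d3 by (simp add: D_def)
  have i1: "D * w1 \<in> \<int>"
  proof -
    have "D * w1 = of_int (d2*d3) * (of_int d1 * w1)" by (simp add: D_def algebra_simps)
    then show ?thesis by (simp only:) (rule Ints_mult[OF Ints_of_int d1(2)])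
  qed
  have i2: "D * w2 \<in> \<int>"
  proof -
    have "D * w2 = of_int (d1*d3) * (of_int d2 * w2)" by (simp add: D_def algebra_simps)
    then show ?thesis by (simp only:) (rule Ints_mult[OF Ints_of_int d2(2)])
  qed
  have i3: "D * w3 \<in> \<int>"
  proof -
    have "D * w3 = of_int (d1*d2) * (of_int d3 * w3)" by (simp add: D_def algebra_simps)
    then show ?thesis by (simp only:) (rule Ints_mult[OF Ints_of_int d3(2)])
  qed
  define v :: "real^3" where "v = vector [D*w1, D*w2, D*w3]"
  have "\<forall>k. v$k \<in> \<int>" using i1 i2 i3 by (simp add: v_def forall_3)
  moreover have "v \<noteq> 0" using w(4) D0 by (auto simp: v_def vec_eq_iff forall_3)
  moreover have "v \<bullet> a = 0"
  proof -
    have "v \<bullet> a = D * (w1*a$1 + w2*a$2 + w3*a$3)" by (simp add: v_def inner_vec_def sum_3 algebra_simps)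
    then show ?thesis using w(5) by simp
  qed
  moreover have "v \<bullet> b = 0"
  proof -
    have "v \<bullet> b = D * (w1*b$1 + w2*b$2 + w3*b$3)" by (simp add: v_def inner_vec_def sum_3 algebra_simps)
    then show ?thesis using w(6) by simp
  qed
  ultimately show ?thesis by blast
qed

lemma int_digits:
  fixes a b c K :: int
  assumes "\<bar>a\<bar> \<le> K" "\<bar>b\<bar> \<le> K" "\<bar>c\<bar> \<le> K" "a + b*(2*K+1) + c*(2*K+1)^2 = 0"
  shows "a = 0 \<and> b = 0 \<and> c = 0"
proof -
  let ?M = "2*K+1"
  have K0: "K \<ge> 0" using assms(1) by simp
  have "a = ?M * (-(b + c*?M))" using assms(4) by (simp add: algebra_simps power2_eq_square)
  then have "?M dvd a" by (metis dvd_triv_left)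
  then have a0: "a = 0" using dvd_imp_le_int[of a ?M] assms(1) K0 by fastforce
  then have e: "b + c*?M = 0" using assms(4) K0
    by (smt (verit, best) \<open>a = ?M * (-(b + c*?M))\<close> mult_eq_0_iff)
  then have "?M dvd b" by (metis add.commute add_eq_0_iff2 dvd_minus_iff dvd_triv_right)
  then have b0: "b = 0" using dvd_imp_le_int[of b ?M] assms(2) K0 by fastforce
  then have "c = 0" using e K0 by simp
  then show ?thesis using a0 b0 by simp
qed

lemma disj:
  fixes w a b x y :: "real^3"
  assumes "\<forall>k. w$k \<in> \<int>" "w \<bullet> a = 0" "w \<bullet> b = 0" "w \<bullet> (y - x) \<notin> \<int>"
  shows "Pi3 ` line3 x a \<inter> Pi3 ` line3 y b = {}"
proof (rule ccontr)
  assume "Pi3 ` line3 x a \<inter> Pi3 ` line3 y b \<noteq> {}"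
  then obtain t s where e: "Pi3 (x + t *\<^sub>R a) = Pi3 (y + s *\<^sub>R b)" by (auto simp: line3_def)
  have "y + s *\<^sub>R b \<in> Pi3 (y + s *\<^sub>R b)" by (simp add: Pi3_def)
  then have "y + s *\<^sub>R b \<in> Pi3 (x + t *\<^sub>R a)" using e by simp
  then have d: "\<forall>k. (y + s *\<^sub>R b - (x + t *\<^sub>R a)) $ k \<in> \<int>" by (simp add: Pi3_def)
  have "w \<bullet> (y + s *\<^sub>R b - (x + t *\<^sub>R a)) \<in> \<int>"
    using d assms(1) by (simp add: inner_vec_def sum_3 Ints_add Ints_mult del: vector_add_component vector_minus_component vector_scaleR_component)
  moreover have "w \<bullet> (y + s *\<^sub>R b - (x + t *\<^sub>R a)) = w \<bullet> (y - x)"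
    using assms(2,3) by (simp add: inner_diff_right inner_add_right)
  ultimately show False using assms(4) by simp
qed

lemma small_not_int: "(y::real) \<noteq> 0 \<Longrightarrow> \<bar>y\<bar> < 1 \<Longrightarrow> y \<notin> \<int>"
proof
  assume y: "y \<noteq> 0" "\<bar>y\<bar> < 1" "y \<in> \<int>"
  then obtain m where m: "y = of_int m" by (auto elim: Ints_cases)
  then have "m \<noteq> 0" "\<bar>m\<bar> < 1" using y by auto
  then show False by simp
qed

theorem lemma4p1:
  fixes n :: nat and \<xi> :: "nat \<Rightarrow> real^3"
  assumes "n \<ge> 2"
    and "\<forall>i\<in>{1..n}. rat_vec (\<xi> i)"
    and "\<forall>i\<in>{1..n-1}. \<xi> i \<noteq> 0"
  shows "\<exists>x :: nat \<Rightarrow> real^3.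
     (\<xi> n \<noteq> 0 \<longrightarrow>
        (\<forall>i\<in>{1..n}. \<forall>j\<in>{1..n}. i \<noteq> j \<longrightarrow>
           Pi3 ` line3 (x i) (\<xi> i) \<inter> Pi3 ` line3 (x j) (\<xi> j) = {})) \<and>
     (\<xi> n = 0 \<longrightarrow>
        (\<forall>i\<in>{1..n-1}. \<forall>j\<in>{1..n-1}. i \<noteq> j \<longrightarrow>
           Pi3 ` line3 (x i) (\<xi> i) \<inter> Pi3 ` line3 (x j) (\<xi> j) = {}) \<and>
        (\<forall>i\<in>{1..n-1}. zeroY3 \<notin> Pi3 ` line3 (x i) (\<xi> i)))"
proof -
  define \<eta> where "\<eta> = \<xi>(0 := 0)"
  have rat: "rat_vec (\<eta> i)" if "i \<le> n" for i
  proof (cases "i = 0")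
    case True then show ?thesis by (simp add: \<eta>_def rat_vec_def)
  next
    case False then show ?thesis using assms(2) that by (simp add: \<eta>_def)
  qed
  have "\<forall>i j. \<exists>w. (i \<le> n \<and> j \<le> n) \<longrightarrow>
      (\<forall>k. w$k \<in> \<int>) \<and> w \<noteq> 0 \<and> w \<bullet> \<eta> i = 0 \<and> w \<bullet> \<eta> j = 0"
    using ortho_int rat by blast
  then obtain W where W: "\<And>i j. i \<le> n \<Longrightarrow> j \<le> n \<Longrightarrow>
      (\<forall>k. W i j $k \<in> \<int>) \<and> W i j \<noteq> 0 \<and> W i j \<bullet> \<eta> i = 0 \<and> W i j \<bullet> \<eta> j = 0"
    by metis
  define c where "c i j k = \<lfloor>W i j $ k\<rfloor>" for i j k
  have Wc: "W i j $ k = of_int (c i j k)" if "i \<le> n" "j \<le> n" for i j k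
    using W[OF that] by (simp add: c_def)
  define K where "K = (\<Sum>p\<in>{..n}\<times>{..n}\<times>(UNIV::3 set). \<bar>c (fst p) (fst (snd p)) (snd (snd p))\<bar>)"
  have Kb: "\<bar>c i j k\<bar> \<le> K" if "i \<le> n" "j \<le> n" for i j k
  proof -
    have "(i,j,k) \<in> {..n}\<times>{..n}\<times>(UNIV::3 set)" using that by simp
    then show ?thesis unfolding K_def
      using member_le_sum[of "(i,j,k)" "{..n}\<times>{..n}\<times>(UNIV::3 set)" "\<lambda>p. \<bar>c (fst p) (fst (snd p)) (snd (snd p))\<bar>"]
      by simp
  qed
  define M :: int where "M = 2*K+1"
  define v :: "real^3" where "v = vector [1, of_int M, of_int M^2]"
  have Wv: "W i j \<bullet> v = of_int (c i j 1 + c i j 2 * M + c i j 3 * M^2)" if "i \<le> n" "j \<le> n" for i j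
    using Wc[OF that] by (simp add: inner_vec_def sum_3 v_def)
  have Wv0: "W i j \<bullet> v \<noteq> 0" if "i \<le> n" "j \<le> n" for i j
  proof
    assume "W i j \<bullet> v = 0"
    then have "real_of_int (c i j 1 + c i j 2 * M + c i j 3 * M^2) = 0" using Wv[OF that] by simp
    then have "c i j 1 + c i j 2 * M + c i j 3 * M^2 = 0" by (simp only: of_int_eq_0_iff)
    then have "c i j 1 + c i j 2 * (2*K+1) + c i j 3 * (2*K+1)^2 = 0"
      by (simp only: M_def)
    then have "c i j 1 = 0 \<and> c i j 2 = 0 \<and> c i j 3 = 0"
      using int_digits Kb[OF that] by blast
    then have "W i j = 0" using Wc[OF that] by (simp add: vec_eq_iff forall_3)
    then show False using W[OF that] by blast
  qed
  define B where "B = (\<Sum>p\<in>{..n}\<times>{..n}. \<bar>W (fst p) (snd p) \<bullet> v\<bar>) + 1"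
  have Bb: "\<bar>W i j \<bullet> v\<bar> < B" if "i \<le> n" "j \<le> n" for i j
  proof -
    have "(i,j) \<in> {..n}\<times>{..n}" using that by simp
    then have "\<bar>W i j \<bullet> v\<bar> \<le> (\<Sum>p\<in>{..n}\<times>{..n}. \<bar>W (fst p) (snd p) \<bullet> v\<bar>)"
      using member_le_sum[of "(i,j)" "{..n}\<times>{..n}" "\<lambda>p. \<bar>W (fst p) (snd p) \<bullet> v\<bar>"] by simp
    then show ?thesis by (simp add: B_def)
  qed
  have B0: "B > 0" using Bb[of 0 0] by simp
  define \<epsilon> where "\<epsilon> = 1 / ((real n + 1) * B)"
  define x where "x i = (real i * \<epsilon>) *\<^sub>R v" for i
  have key: "Pi3 ` line3 (x i) (\<eta> i) \<inter> Pi3 ` line3 (x j) (\<eta> j) = {}"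
    if "i \<le> n" "j \<le> n" "i \<noteq> j" for i j
  proof (rule disj)
    show "\<forall>k. W i j $ k \<in> \<int>" "W i j \<bullet> \<eta> i = 0" "W i j \<bullet> \<eta> j = 0" using W[OF that(1,2)] by auto
    let ?p = "W i j \<bullet> v"
    let ?d = "real j - real i"
    have eq: "W i j \<bullet> (x j - x i) = ?d * ?p / ((real n + 1) * B)"
    proof -
      have "x j - x i = (?d * \<epsilon>) *\<^sub>R v" unfolding x_def by (simp only: scaleR_diff_left[symmetric] left_diff_distrib)
      then have "W i j \<bullet> (x j - x i) = (?d * \<epsilon>) * ?p" by (simp only: inner_scaleR_right)
      also have "\<dots> = ?d * ?p / ((real n + 1) * B)" unfolding \<epsilon>_def by simp
      finally show ?thesis .
    qed
    have d1: "\<bar>?d\<bar> \<le> real n" using that by auto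
    have d0: "?d \<noteq> 0" using that by auto
    have p: "\<bar>?p\<bar> < B" "?p \<noteq> 0" using Bb Wv0 that by auto
    have "\<bar>?d * ?p\<bar> \<le> real n * \<bar>?p\<bar>" unfolding abs_mult
      by (rule mult_right_mono[OF d1]) simp
    also have "\<dots> \<le> real n * B" using p(1) by (intro mult_left_mono) auto
    also have "\<dots> < (real n + 1) * B" using B0 by (simp add: algebra_simps)
    finally have lt: "\<bar>?d * ?p\<bar> < (real n + 1) * B" .
    have pos: "(real n + 1) * B > 0" using B0 by simp
    have "\<bar>?d * ?p / ((real n + 1) * B)\<bar> = \<bar>?d * ?p\<bar> / ((real n + 1) * B)"
      by (rule abs_div_pos[OF pos, symmetric])
    also have "\<dots> < 1" by (subst divide_less_eq_1_pos[OF pos]) (rule lt)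
    finally have "\<bar>?d * ?p / ((real n + 1) * B)\<bar> < 1" .
    moreover have "?d * ?p / ((real n + 1) * B) \<noteq> 0" using d0 p(2) pos B0 by simp
    ultimately show "W i j \<bullet> (x j - x i) \<notin> \<int>" unfolding eq by (rule small_not_int[rotated])
  qed
  have eta: "\<eta> i = \<xi> i" if "i \<ge> 1" for i using that by (simp add: \<eta>_def)
  have z: "zeroY3 \<in> Pi3 ` line3 (x 0) (\<eta> 0)"
    by (simp add: zeroY3_def x_def \<eta>_def line3_def)
  show ?thesis
  proof (intro exI[of _ x] conjI impI ballI)
    fix i j assume "i \<in> {1..n}" "j \<in> {1..n}" "i \<noteq> j"
    show "Pi3 ` line3 (x i) (\<xi> i) \<inter> Pi3 ` line3 (x j) (\<xi> j) = {}"
    proof -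
      have h: "i \<le> n" "j \<le> n" "i \<ge> 1" "j \<ge> 1" using \<open>i \<in> _\<close> \<open>j \<in> _\<close> by auto
      show ?thesis using key[OF h(1,2) \<open>i \<noteq> j\<close>] eta[OF h(3)] eta[OF h(4)] by simp
    qed
  next
    fix i j assume "i \<in> {1..n-1}" "j \<in> {1..n-1}" "i \<noteq> j"
    show "Pi3 ` line3 (x i) (\<xi> i) \<inter> Pi3 ` line3 (x j) (\<xi> j) = {}"
    proof -
      have h: "i \<le> n" "j \<le> n" "i \<ge> 1" "j \<ge> 1" using \<open>i \<in> _\<close> \<open>j \<in> _\<close> by auto
      show ?thesis using key[OF h(1,2) \<open>i \<noteq> j\<close>] eta[OF h(3)] eta[OF h(4)] by simp
    qed
  next
    fix i assume i: "i \<in> {1..n-1}"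
    have "Pi3 ` line3 (x i) (\<eta> i) \<inter> Pi3 ` line3 (x 0) (\<eta> 0) = {}" proof -
      have "i \<le> n" "i \<noteq> 0" using i by auto
      then show ?thesis using key[of i 0] by blast
    qed
    then show "zeroY3 \<notin> Pi3 ` line3 (x i) (\<xi> i)" using z eta[of i] i by auto
  qed
qed

end
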